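(* Let $R$ be a commutative ring with $1$, let $A,B\unlhd R$ be ideals, and let $n\ge 3$. Then $$ C_{\operatorname{GL}(n,R)}\Big(E(n,R,A),\big[E(n,R,(B:A)),E(n,R,A)\big]\Big)=C\big(n,R,(B:A)\big). $$
   Context: Commutators are left-normed: $[x,y]=xyx^{-1}y^{-1}$, and for subgroups $F,H$, $[F,H]$ is the subgroup generated by all $[f,h]$, $f\in F$, $h\in H$. For subgroups $F,H$ of a group $G$, the centraliser of $F$ modulo $H$ is $C_G(F,H)=\{g\in G\mid [f,g]\in H \text{ for all } f\in F\}$. For $\xi\in R$ and $1\le i\ne j\le n$, $t_{ij}(\xi)=e+\xi e_{ij}$. For an ideal $I$, $E(n,I)$ is the subgroup generated by all $t_{ij}(\xi)$, $\xi\in I$, $i\ne j$; $E(n,R)=E(n,R)$ with $I=R$ is the elementary group; and the relative elementary subgroup $E(n,R,I)$ is the normal closure of $E(n,I)$ in $E(n,R)$. The full congruence subgroup $C(n,R,I)$ is the set of $g\in\operatorname{GL}(n,R)$ whose image modulo $I$ is a scalar matrix $\lambda e$ with $\lambda\in (R/I)^*$, i.e. $g_{ij}\in I$ and $g_{ii}-g_{jj}\in I$ for all $i\ne j$. The ideal quotient is $(B:A)=\{x\in R\mid xA\subseteq B\}$. *)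

theory Defs
  imports "HOL-Analysis.Analysis"
begin

text \<open>Matrices over a commutative ring 'a, indexed by a finite type 'n (n = CARD('n)).\<close>

definition is_ideal :: "'a::comm_ring_1 set \<Rightarrow> bool" where
  "is_ideal I \<longleftrightarrow> 0 \<in> I \<and> (\<forall>x\<in>I. \<forall>y\<in>I. x + y \<in> I) \<and> (\<forall>r. \<forall>x\<in>I. r * x \<in> I)"

definition ideal_quot :: "'a::comm_ring_1 set \<Rightarrow> 'a set \<Rightarrow> 'a set" where
  "ideal_quot B A = {x. \<forall>a\<in>A. x * a \<in> B}"

definition GL :: "('a::comm_ring_1 ^'n::finite^'n) set" where
  "GL = {g. \<exists>h. g ** h = mat 1 \<and> h ** g = mat 1}"

definition minv :: "'a::comm_ring_1 ^'n::finite^'n \<Rightarrow> 'a^'n^'n" where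
  "minv g = (SOME h. g ** h = mat 1 \<and> h ** g = mat 1)"

definition mcomm :: "'a::comm_ring_1 ^'n::finite^'n \<Rightarrow> 'a^'n^'n \<Rightarrow> 'a^'n^'n" where
  "mcomm x y = x ** y ** minv x ** minv y"

inductive_set gen_subgroup :: "('a::comm_ring_1 ^'n::finite^'n) set \<Rightarrow> ('a^'n^'n) set"
  for S where
  one: "mat 1 \<in> gen_subgroup S"
| base: "s \<in> S \<Longrightarrow> s \<in> gen_subgroup S"
| mult: "x \<in> gen_subgroup S \<Longrightarrow> y \<in> gen_subgroup S \<Longrightarrow> x ** y \<in> gen_subgroup S"
| inv: "x \<in> gen_subgroup S \<Longrightarrow> minv x \<in> gen_subgroup S"

definition comm_subgroup :: "('a::comm_ring_1 ^'n::finite^'n) set \<Rightarrow> ('a^'n^'n) set \<Rightarrow> ('a^'n^'n) set" where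
  "comm_subgroup F H = gen_subgroup {mcomm f h | f h. f \<in> F \<and> h \<in> H}"

definition transvection :: "'n::finite \<Rightarrow> 'n \<Rightarrow> 'a::comm_ring_1 \<Rightarrow> 'a^'n^'n" where
  "transvection i j \<xi> = mat 1 + (\<chi> k l. if k = i \<and> l = j then \<xi> else 0)"

definition E_ideal :: "'a::comm_ring_1 set \<Rightarrow> ('a^'n::finite^'n) set" where
  "E_ideal I = gen_subgroup {transvection i j \<xi> | i j \<xi>. i \<noteq> j \<and> \<xi> \<in> I}"

definition E_rel :: "'a::comm_ring_1 set \<Rightarrow> ('a^'n::finite^'n) set" where
  "E_rel I = gen_subgroup {g ** x ** minv g | g x. g \<in> E_ideal UNIV \<and> x \<in> E_ideal I}"

definition centraliser_mod :: "('a::comm_ring_1 ^'n::finite^'n) set \<Rightarrow> ('a^'n^'n) set \<Rightarrow> ('a^'n^'n) set" where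
  "centraliser_mod F H = {g \<in> GL. \<forall>f\<in>F. mcomm f g \<in> H}"

definition full_congruence :: "'a::comm_ring_1 set \<Rightarrow> ('a^'n::finite^'n) set" where
  "full_congruence I = {g \<in> GL. \<forall>i j. i \<noteq> j \<longrightarrow> g$i$j \<in> I \<and> g$i$i - g$j$j \<in> I}"

end

theory Submission
  imports Defs
begin


definition dotv :: "'a::comm_ring_1^'n::finite \<Rightarrow> 'a^'n \<Rightarrow> 'a" where
  "dotv w p = (\<Sum>k\<in>UNIV. w$k * p$k)"
definition outer :: "'a::comm_ring_1^'n::finite \<Rightarrow> 'a^'n \<Rightarrow> 'a^'n^'n" where
  "outer p w = (\<chi> i j. p$i * w$j)"
definition E1 :: "'a::comm_ring_1^'n::finite \<Rightarrow> 'a^'n \<Rightarrow> 'a^'n^'n" where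
  "E1 p w = mat 1 + outer p w"

lemma outer_mult: "outer p1 w1 ** outer p2 w2 = outer (dotv w1 p2 *s p1) w2"
  by (simp add: outer_def matrix_matrix_mult_def dotv_def vec_eq_iff vector_scalar_mult_def
      sum_distrib_left sum_distrib_right algebra_simps)

lemma mat1_mult_outer: "mat 1 ** outer p w = outer p w" by simp
lemma outer_mult_mat1: "outer p w ** mat 1 = outer p w" by simp

lemma mm_rdistrib: "((A::'a::comm_ring_1^'n::finite^'n) + B) ** C = A ** C + B ** C"
  by (simp add: matrix_matrix_mult_def vec_eq_iff sum.distrib algebra_simps)

lemma E1_mult: "E1 p1 w1 ** E1 p2 w2 = mat 1 + outer p1 w1 + outer p2 w2 + outer (dotv w1 p2 *s p1) w2"
  by (simp add: E1_def matrix_add_ldistrib mm_rdistrib outer_mult algebra_simps)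

lemma outer_add_left: "outer (p1+p2) w = outer p1 w + outer p2 w"
  by (simp add: outer_def vec_eq_iff algebra_simps)
lemma outer_add_right: "outer p (w1+w2) = outer p w1 + outer p w2"
  by (simp add: outer_def vec_eq_iff algebra_simps)
lemma outer_zero_left[simp]: "outer 0 w = 0"
  by (simp add: outer_def vec_eq_iff)
lemma outer_zero_right[simp]: "outer p 0 = 0"
  by (simp add: outer_def vec_eq_iff)
lemma E1_zero_left[simp]: "E1 0 w = mat 1" by (simp add: E1_def)
lemma E1_zero_right[simp]: "E1 p 0 = mat 1" by (simp add: E1_def)
lemma dotv_add_right: "dotv w (p1+p2) = dotv w p1 + dotv w p2"
  by (simp add: dotv_def sum.distrib algebra_simps)
lemma dotv_add_left: "dotv (w1+w2) p = dotv w1 p + dotv w2 p"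
  by (simp add: dotv_def sum.distrib algebra_simps)
lemma dotv_minus_right: "dotv w (-p) = - dotv w p"
  by (simp add: dotv_def sum_negf)
lemma dotv_minus_left: "dotv (-w) p = - dotv w p"
  by (simp add: dotv_def sum_negf)
lemma dotv_diff_right: "dotv w (p1-p2) = dotv w p1 - dotv w p2"
  by (simp add: dotv_def sum_subtractf algebra_simps)
lemma dotv_diff_left: "dotv (w1-w2) p = dotv w1 p - dotv w2 p"
  by (simp add: dotv_def sum_subtractf algebra_simps)
lemma dotv_smult_right: "dotv w (c *s p) = c * dotv w p"
  by (simp add: dotv_def sum_distrib_left algebra_simps)
lemma dotv_smult_left: "dotv (c *s w) p = c * dotv w p"
  by (simp add: dotv_def sum_distrib_left algebra_simps)
lemma dotv_axis_right: "dotv w (axis i c) = w$i * c"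
proof -
  have "dotv w (axis i c) = (\<Sum>k\<in>UNIV. if k = i then w$k * c else 0)"
    unfolding dotv_def axis_def by (rule sum.cong) auto
  then show ?thesis by simp
qed
lemma dotv_axis_left: "dotv (axis i c) p = c * p$i"
proof -
  have "dotv (axis i c) p = (\<Sum>k\<in>UNIV. if k = i then c * p$k else 0)"
    unfolding dotv_def axis_def by (rule sum.cong) auto
  then show ?thesis by simp
qed
lemma dotv_zero_left[simp]: "dotv 0 p = 0" by (simp add: dotv_def)
lemma dotv_zero_right[simp]: "dotv w 0 = 0" by (simp add: dotv_def)

lemma E1_mult_orth: "dotv w1 p2 = 0 \<Longrightarrow> E1 p1 w1 ** E1 p2 w2 = mat 1 + outer p1 w1 + outer p2 w2"
  by (simp add: E1_mult)
lemma E1_same_w: "dotv w p2 = 0 \<Longrightarrow> E1 p1 w ** E1 p2 w = E1 (p1+p2) w"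
  by (subst E1_mult_orth) (simp_all add: E1_def outer_add_left algebra_simps)
lemma E1_same_p: "dotv w1 p = 0 \<Longrightarrow> E1 p w1 ** E1 p w2 = E1 p (w1+w2)"
  by (subst E1_mult_orth) (simp_all add: E1_def outer_add_right algebra_simps)
lemma E1_inv1: "dotv w p = 0 \<Longrightarrow> E1 p w ** E1 (-p) w = mat 1"
  by (simp add: E1_same_w dotv_minus_right)
lemma E1_inv2: "dotv w p = 0 \<Longrightarrow> E1 (-p) w ** E1 p w = mat 1"
  by (simp add: E1_same_w)

lemma minv_unique:
  fixes g h :: "'a::comm_ring_1^'n::finite^'n"
  assumes "g ** h = mat 1" "h ** g = mat 1" shows "minv g = h"
proof -
  let ?h = "minv g"
  have ex: "\<exists>h. g ** h = mat 1 \<and> h ** g = mat 1" using assms by blast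
  have "g ** ?h = mat 1 \<and> ?h ** g = mat 1" unfolding minv_def by (rule someI_ex[OF ex])
  then have "?h = ?h ** (g ** h)" using assms by simp
  also have "\<dots> = (?h ** g) ** h" by (simp add: matrix_mul_assoc)
  also have "\<dots> = h" using \<open>g ** ?h = mat 1 \<and> ?h ** g = mat 1\<close> by simp
  finally show ?thesis .
qed

lemma minv_E1: "dotv w p = 0 \<Longrightarrow> minv (E1 p w) = E1 (-p) w"
  by (simp add: minv_unique E1_inv1 E1_inv2)
lemma E1_GL: "dotv w p = 0 \<Longrightarrow> E1 p w \<in> GL"
  unfolding GL_def using E1_inv1 E1_inv2 by blast

lemma mat_outer: "g ** outer p w = outer (g *v p) w"
  unfolding outer_def matrix_matrix_mult_def matrix_vector_mult_def vec_eq_iff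
  by (simp add: sum_distrib_right mult.assoc)
lemma outer_mat: "outer p w ** g = outer p (w v* g)"
  unfolding outer_def matrix_matrix_mult_def vector_matrix_mult_def vec_eq_iff
  by (simp add: sum_distrib_left mult.assoc mult.left_commute)

lemma E1_conj:
  fixes g g' :: "'a::comm_ring_1^'n::finite^'n"
  assumes "g ** g' = mat 1"
  shows "g ** E1 p w ** g' = E1 (g *v p) (w v* g')"
proof -
  have "g ** E1 p w ** g' = g ** g' + (g ** outer p w) ** g'"
    unfolding E1_def matrix_add_ldistrib mm_rdistrib by simp
  also have "\<dots> = E1 (g *v p) (w v* g')" using assms by (simp add: E1_def mat_outer outer_mat)
  finally show ?thesis .
qed

lemma outer_mulv: "outer p w *v v = dotv w v *s p"
  unfolding outer_def matrix_vector_mult_def dotv_def vec_eq_iff vector_scalar_mult_def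
  by (simp add: sum_distrib_left sum_distrib_right mult.assoc mult.left_commute mult.commute)
lemma vmul_outer: "v v* outer p w = dotv v p *s w"
  unfolding outer_def vector_matrix_mult_def dotv_def vec_eq_iff vector_scalar_mult_def
  by (simp add: sum_distrib_left sum_distrib_right mult.assoc mult.left_commute mult.commute)
lemma E1_mulv: "E1 p w *v v = v + dotv w v *s p"
  by (simp add: E1_def matrix_vector_mult_add_rdistrib outer_mulv)
lemma vmul_E1: "v v* E1 p w = v + dotv v p *s w"
  by (simp add: E1_def vector_matrix_mult_add_rdistrib vmul_outer)

lemma GL_inv:
  assumes "g \<in> GL" shows "g ** minv g = mat 1" "minv g ** g = mat 1"
proof -
  have ex: "\<exists>h. g ** h = mat 1 \<and> h ** g = mat 1" using assms by (simp add: GL_def)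
  have "g ** minv g = mat 1 \<and> minv g ** g = mat 1" unfolding minv_def by (rule someI_ex[OF ex])
  then show "g ** minv g = mat 1" "minv g ** g = mat 1" by auto
qed

lemma GL_minv: "g \<in> GL \<Longrightarrow> minv g \<in> GL"
proof -
  assume "g \<in> GL"
  from GL_inv[OF this] show ?thesis unfolding GL_def by blast
qed
lemma GL_minv_minv: "g \<in> GL \<Longrightarrow> minv (minv g) = g"
  using GL_inv by (metis minv_unique)
lemma GL_mult: "g \<in> GL \<Longrightarrow> h \<in> GL \<Longrightarrow> g ** h \<in> GL"
proof -
  assume g: "g \<in> GL" and h: "h \<in> GL"
  have "(g ** h) ** (minv h ** minv g) = mat 1"
    by (metis GL_inv g h matrix_mul_assoc matrix_mul_rid)
  moreover have "(minv h ** minv g) ** (g ** h) = mat 1"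
    by (metis GL_inv g h matrix_mul_assoc matrix_mul_rid)
  ultimately show ?thesis unfolding GL_def by blast
qed
lemma GL_minv_mult: "g \<in> GL \<Longrightarrow> h \<in> GL \<Longrightarrow> minv (g ** h) = minv h ** minv g"
  by (rule minv_unique) (metis GL_inv matrix_mul_assoc matrix_mul_rid)+
lemma GL_one[simp]: "mat 1 \<in> GL"
  unfolding GL_def by (auto intro!: exI[of _ "mat 1"])
lemma minv_one[simp]: "minv (mat 1 :: 'a::comm_ring_1^'n::finite^'n) = mat 1"
  by (rule minv_unique) simp_all

lemma GL_cancel1: "g \<in> GL \<Longrightarrow> X ** g ** minv g = X"
  by (metis GL_inv(1) matrix_mul_assoc matrix_mul_rid)
lemma GL_cancel2: "g \<in> GL \<Longrightarrow> X ** minv g ** g = X"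
  by (metis GL_inv(2) matrix_mul_assoc matrix_mul_rid)
lemma GL_cancel3: "g \<in> GL \<Longrightarrow> g ** minv g = mat 1"
  by (rule GL_inv)
lemma GL_cancel4: "g \<in> GL \<Longrightarrow> minv g ** g = mat 1"
  by (rule GL_inv)

lemmas GL_simps = GL_cancel1 GL_cancel2 GL_cancel3 GL_cancel4 GL_minv_mult GL_minv_minv
  GL_minv GL_mult matrix_mul_assoc

lemma gen_subgroup_GL: "x \<in> gen_subgroup S \<Longrightarrow> S \<subseteq> GL \<Longrightarrow> x \<in> GL"
  by (induction x rule: gen_subgroup.induct) (auto intro: GL_mult GL_minv)

lemma mcomm_GL: "x \<in> GL \<Longrightarrow> y \<in> GL \<Longrightarrow> mcomm x y \<in> GL"
  unfolding mcomm_def by (simp add: GL_mult GL_minv)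

lemma minv_mcomm: "x \<in> GL \<Longrightarrow> y \<in> GL \<Longrightarrow> minv (mcomm x y) = mcomm y x"
  unfolding mcomm_def by (simp add: GL_simps)

lemma conj_mcomm: "g \<in> GL \<Longrightarrow> x \<in> GL \<Longrightarrow> y \<in> GL \<Longrightarrow>
   g ** mcomm x y ** minv g = mcomm (g ** x ** minv g) (g ** y ** minv g)"
  unfolding mcomm_def by (simp add: GL_simps)

lemma transvection_E1: "transvection i j \<xi> = E1 (axis i \<xi>) (axis j 1)"
  unfolding transvection_def E1_def outer_def axis_def by (simp add: vec_eq_iff)

lemma transvection_GL: "i \<noteq> j \<Longrightarrow> transvection i j \<xi> \<in> GL"
  unfolding transvection_E1 by (rule E1_GL) (simp add: dotv_axis_left, simp add: axis_def)

lemma E_ideal_GL: "x \<in> E_ideal I \<Longrightarrow> x \<in> GL"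
  unfolding E_ideal_def by (erule gen_subgroup_GL) (auto intro: transvection_GL)

lemma E_rel_GL: "x \<in> E_rel I \<Longrightarrow> x \<in> GL"
  unfolding E_rel_def by (erule gen_subgroup_GL)
    (auto intro!: GL_mult GL_minv intro: E_ideal_GL)

lemma axis_nth_neq[simp]: "j \<noteq> i \<Longrightarrow> axis i x $ j = 0"
  by (simp add: axis_def)

lemma axis_zero[simp]: "axis i 0 = 0"
  by (simp add: axis_def vec_eq_iff)

lemma E1_comm:
  assumes "dotv (axis h 1) P = 0" "dotv W (axis h 1) = 0" "dotv W P = 0"
  shows "mcomm (E1 P (axis h 1)) (E1 (axis h 1) W) = E1 P W"
proof -
  let ?x = "E1 P (axis h 1)" and ?y = "E1 (axis h 1) W"
  have mx: "minv ?x = E1 (-P) (axis h 1)" using assms by (simp add: minv_E1)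
  have my: "minv ?y = E1 (- axis h 1) W" using assms by (simp add: minv_E1)
  have xx: "?x ** minv ?x = mat 1" using assms mx by (simp add: E1_inv1)
  have "?x ** ?y ** minv ?x = E1 (?x *v axis h 1) (W v* minv ?x)"
    using E1_conj[OF xx] .
  also have "\<dots> = E1 (axis h 1 + P) W"
    using assms by (simp add: mx E1_mulv vmul_E1 dotv_axis_left dotv_minus_right)
  finally have "mcomm ?x ?y = E1 (axis h 1 + P) W ** E1 (- axis h 1) W"
    unfolding mcomm_def my by simp
  also have "\<dots> = E1 P W" using assms
    by (subst E1_same_w) (simp_all add: dotv_minus_right)
  finally show ?thesis .
qed

lemma E1_axis_axis: "E1 (axis i \<alpha>) (axis j \<beta>) = transvection i j (\<alpha>*\<beta>)"
  unfolding transvection_def E1_def outer_def axis_def by (simp add: vec_eq_iff)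

lemma transvection_comm:
  assumes "i \<noteq> h" "h \<noteq> j" "i \<noteq> j"
  shows "mcomm (transvection i h \<alpha>) (transvection h j \<beta>) = transvection i j (\<alpha>*\<beta>)"
proof -
  have "mcomm (E1 (axis i \<alpha>) (axis h 1)) (E1 (axis h 1) (axis j \<beta>)) = E1 (axis i \<alpha>) (axis j \<beta>)"
    by (rule E1_comm) (use assms in \<open>simp_all add: dotv_axis_left dotv_axis_right\<close>)
  then show ?thesis by (simp add: E1_axis_axis)
qed

lemma exists_third:
  assumes "CARD('n::finite) \<ge> 3"
  shows "\<exists>h::'n. h \<noteq> i \<and> h \<noteq> j"
proof (rule ccontr)
  assume "\<not> ?thesis"
  then have "(UNIV::'n set) \<subseteq> {i, j}" by auto
  then have "CARD('n) \<le> card {i,j}" by (rule card_mono[rotated]) simp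
  also have "\<dots> \<le> 2" by (simp add: card_insert_le_m1)
  finally show False using assms by simp
qed

lemma ideal_quot_ideal: "is_ideal B \<Longrightarrow> is_ideal (ideal_quot B A)"
  unfolding is_ideal_def ideal_quot_def by (auto simp: distrib_right mult.assoc)

lemma E_ideal_mono: "I \<subseteq> J \<Longrightarrow> x \<in> E_ideal I \<Longrightarrow> x \<in> E_ideal J"
  unfolding E_ideal_def
  apply (erule gen_subgroup.induct)
  apply (auto intro: gen_subgroup.intros)
  apply (rule gen_subgroup.base) apply blast
  done

lemma E_ideal_rel: "x \<in> E_ideal I \<Longrightarrow> x \<in> E_rel I"
  unfolding E_rel_def
  apply (rule gen_subgroup.base)
  apply (rule CollectI, rule exI[of _ "mat 1"], rule exI[of _ x])
  apply (simp add: E_ideal_def gen_subgroup.one)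
  done

lemma transvection_E_ideal: "i \<noteq> j \<Longrightarrow> \<xi> \<in> I \<Longrightarrow> transvection i j \<xi> \<in> E_ideal I"
  unfolding E_ideal_def by (rule gen_subgroup.base) blast

lemma E_rel_conj:
  assumes g: "g \<in> E_ideal UNIV" and x: "x \<in> E_rel I"
  shows "g ** x ** minv g \<in> E_rel I"
  using x unfolding E_rel_def
proof (induction x rule: gen_subgroup.induct)
  case one
  have "g \<in> GL" using g E_ideal_GL by blast
  then show ?case by (simp add: GL_simps gen_subgroup.one)
next
  case (base s)
  then obtain g0 x0 where s: "s = g0 ** x0 ** minv g0" "g0 \<in> E_ideal UNIV" "x0 \<in> E_ideal I" by blast
  have gG: "g \<in> GL" "g0 \<in> GL" using g s E_ideal_GL by blast+
  have "g ** s ** minv g = (g ** g0) ** x0 ** minv (g ** g0)"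
    using gG by (simp add: s GL_simps)
  moreover have "g ** g0 \<in> E_ideal UNIV" using g s(2) unfolding E_ideal_def by (rule gen_subgroup.mult)
  ultimately show ?case using s(3) by (auto intro!: gen_subgroup.base)
next
  case (mult x y)
  have gG: "g \<in> GL" using g E_ideal_GL by blast
  have "g ** (x ** y) ** minv g = (g ** x ** minv g) ** (g ** y ** minv g)"
    using gG by (simp add: GL_simps)
  then show ?case using mult by (auto intro: gen_subgroup.mult)
next
  case (inv x)
  have gG: "g \<in> GL" using g E_ideal_GL by blast
  have xG: "x \<in> GL" using inv(1) E_rel_GL unfolding E_rel_def by blast
  have "g ** minv x ** minv g = minv (g ** x ** minv g)"
    using gG xG by (simp add: GL_simps)
  then show ?case using inv by (auto intro: gen_subgroup.inv)
qed

lemma dotv_sum_right: "dotv w (\<Sum>x\<in>S. f x) = (\<Sum>x\<in>S. dotv w (f x))"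
  by (induction S rule: infinite_finite_induct) (simp_all add: dotv_add_right)
lemma dotv_sum_left: "dotv (\<Sum>x\<in>S. f x) p = (\<Sum>x\<in>S. dotv (f x) p)"
  by (induction S rule: infinite_finite_induct) (simp_all add: dotv_add_left)

lemma E1_sum_w:
  assumes M1: "mat 1 \<in> M" and Mm: "\<And>x y. x \<in> M \<Longrightarrow> y \<in> M \<Longrightarrow> x ** y \<in> M"
    and fin: "finite S"
    and orth: "\<And>x. x \<in> S \<Longrightarrow> dotv w (f x) = 0"
    and mem: "\<And>x. x \<in> S \<Longrightarrow> E1 (f x) w \<in> M"
  shows "E1 (\<Sum>x\<in>S. f x) w \<in> M"
  using fin orth mem
proof (induction S rule: finite_induct)
  case empty
  then show ?case using M1 by simp
next
  case (insert x F)
  have o: "dotv w (\<Sum>x\<in>F. f x) = 0"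
    using insert by (simp add: dotv_sum_right)
  have "E1 (\<Sum>x\<in>insert x F. f x) w = E1 (f x) w ** E1 (\<Sum>x\<in>F. f x) w"
    using insert o by (simp add: E1_same_w)
  then show ?case using insert Mm by simp
qed

lemma E1_sum_p:
  assumes M1: "mat 1 \<in> M" and Mm: "\<And>x y. x \<in> M \<Longrightarrow> y \<in> M \<Longrightarrow> x ** y \<in> M"
    and fin: "finite S"
    and orth: "\<And>x. x \<in> S \<Longrightarrow> dotv (f x) p = 0"
    and mem: "\<And>x. x \<in> S \<Longrightarrow> E1 p (f x) \<in> M"
  shows "E1 p (\<Sum>x\<in>S. f x) \<in> M"
  using fin orth mem
proof (induction S rule: finite_induct)
  case empty
  then show ?case using M1 by simp
next
  case (insert x F)
  have "E1 p (\<Sum>x\<in>insert x F. f x) = E1 p (f x) ** E1 p (\<Sum>x\<in>F. f x)"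
    using insert by (simp add: E1_same_p)
  then show ?case using insert Mm by simp
qed

lemma vec_axis_expand: "(\<Sum>m\<in>UNIV. axis m (P$m)) = (P::'a::comm_ring_1^'n::finite)"
proof -
  have "\<And>k. (\<Sum>m\<in>UNIV. axis m (P$m) $ k) = P$k"
  proof -
    fix k
    have "(\<Sum>m\<in>UNIV. axis m (P$m) $ k) = (\<Sum>m\<in>UNIV. if m = k then P$k else 0)"
      by (rule sum.cong) (auto simp: axis_def)
    then show "(\<Sum>m\<in>UNIV. axis m (P$m) $ k) = P$k" by simp
  qed
  then show ?thesis by (simp add: vec_eq_iff sum_component)
qed

lemma col_E:
  assumes "P$h = 0" "\<And>m. P$m \<in> I"
  shows "E1 P (axis h 1) \<in> E_ideal I"
proof -
  have "E1 (\<Sum>m\<in>UNIV. axis m (P$m)) (axis h 1) \<in> E_ideal I"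
  proof (rule E1_sum_w)
    show "mat 1 \<in> E_ideal I" unfolding E_ideal_def by (rule gen_subgroup.one)
    show "x ** y \<in> E_ideal I" if "x \<in> E_ideal I" "y \<in> E_ideal I" for x y
      using that unfolding E_ideal_def by (rule gen_subgroup.mult)
    show "dotv (axis h 1) (axis m (P $ m)) = 0" for m
      using assms by (cases "m = h") (simp_all add: dotv_axis_left)
    show "E1 (axis m (P $ m)) (axis h 1) \<in> E_ideal I" for m
    proof (cases "m = h")
      case True
      then show ?thesis using assms unfolding E_ideal_def by (simp add: gen_subgroup.one)
    next
      case False
      then show ?thesis using assms by (simp add: E1_axis_axis transvection_E_ideal)
    qed
  qed simp
  then show ?thesis by (simp add: vec_axis_expand)
qed

lemma row_E:
  assumes "W$h = 0" "\<And>m. W$m \<in> I"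
  shows "E1 (axis h 1) W \<in> E_ideal I"
proof -
  have "E1 (axis h 1) (\<Sum>m\<in>UNIV. axis m (W$m)) \<in> E_ideal I"
  proof (rule E1_sum_p)
    show "mat 1 \<in> E_ideal I" unfolding E_ideal_def by (rule gen_subgroup.one)
    show "x ** y \<in> E_ideal I" if "x \<in> E_ideal I" "y \<in> E_ideal I" for x y
      using that unfolding E_ideal_def by (rule gen_subgroup.mult)
    show "dotv (axis m (W $ m)) (axis h 1) = 0" for m
      using assms by (cases "m = h") (simp_all add: dotv_axis_left)
    show "E1 (axis h 1) (axis m (W $ m)) \<in> E_ideal I" for m
    proof (cases "m = h")
      case True
      then show ?thesis using assms unfolding E_ideal_def by (simp add: gen_subgroup.one)
    next
      case False
      then show ?thesis using assms by (simp add: E1_axis_axis transvection_E_ideal)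
    qed
  qed simp
  then show ?thesis by (simp add: vec_axis_expand)
qed

lemma ideal_mult_left: "is_ideal I \<Longrightarrow> x \<in> I \<Longrightarrow> r * x \<in> I"
  unfolding is_ideal_def by blast
lemma ideal_mult_right: "is_ideal I \<Longrightarrow> x \<in> I \<Longrightarrow> x * r \<in> I"
  unfolding is_ideal_def by (metis mult.commute)
lemma ideal_add: "is_ideal I \<Longrightarrow> x \<in> I \<Longrightarrow> y \<in> I \<Longrightarrow> x + y \<in> I"
  unfolding is_ideal_def by blast
lemma ideal_zero: "is_ideal I \<Longrightarrow> 0 \<in> I"
  unfolding is_ideal_def by blast
lemma ideal_neg: "is_ideal I \<Longrightarrow> x \<in> I \<Longrightarrow> - x \<in> I"
  using ideal_mult_left[of I x "-1"] by simp
lemma ideal_diff: "is_ideal I \<Longrightarrow> x \<in> I \<Longrightarrow> y \<in> I \<Longrightarrow> x - y \<in> I"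
  using ideal_add ideal_neg by (metis diff_conv_add_uminus)

lemma comm_sub_GL: "h \<in> comm_subgroup (E_rel I) (E_rel J) \<Longrightarrow> h \<in> GL"
  unfolding comm_subgroup_def by (erule gen_subgroup_GL) (auto intro: mcomm_GL E_rel_GL)

lemma comm_sub_conj:
  assumes g: "g \<in> E_ideal UNIV" and h: "h \<in> comm_subgroup (E_rel I) (E_rel J)"
  shows "g ** h ** minv g \<in> comm_subgroup (E_rel I) (E_rel J)"
  using h unfolding comm_subgroup_def
proof (induction h rule: gen_subgroup.induct)
  case one
  have "g \<in> GL" using g E_ideal_GL by blast
  then show ?case by (simp add: GL_simps gen_subgroup.one)
next
  case (base s)
  then obtain f k where s: "s = mcomm f k" "f \<in> E_rel I" "k \<in> E_rel J" by blast
  have gG: "g \<in> GL" using g E_ideal_GL by blast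
  have "g ** s ** minv g = mcomm (g ** f ** minv g) (g ** k ** minv g)"
    using gG s by (simp add: conj_mcomm E_rel_GL)
  then show ?case using s g by (auto intro!: gen_subgroup.base E_rel_conj)
next
  case (mult x y)
  have gG: "g \<in> GL" using g E_ideal_GL by blast
  have "g ** (x ** y) ** minv g = (g ** x ** minv g) ** (g ** y ** minv g)"
    using gG by (simp add: GL_simps)
  then show ?case using mult by (auto intro: gen_subgroup.mult)
next
  case (inv x)
  have gG: "g \<in> GL" using g E_ideal_GL by blast
  have xG: "x \<in> GL" using inv(1) comm_sub_GL unfolding comm_subgroup_def by blast
  have "g ** minv x ** minv g = minv (g ** x ** minv g)"
    using gG xG by (simp add: GL_simps)
  then show ?case using inv by (auto intro: gen_subgroup.inv)
qed

lemma comm_sub_base: "f \<in> E_rel I \<Longrightarrow> k \<in> E_rel J \<Longrightarrow> mcomm f k \<in> comm_subgroup (E_rel I) (E_rel J)"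
  unfolding comm_subgroup_def by (rule gen_subgroup.base) blast

lemma comm_sub_rev: "k \<in> E_rel J \<Longrightarrow> f \<in> E_rel I \<Longrightarrow> mcomm k f \<in> comm_subgroup (E_rel I) (E_rel J)"
proof -
  assume k: "k \<in> E_rel J" and f: "f \<in> E_rel I"
  have "minv (mcomm f k) \<in> comm_subgroup (E_rel I) (E_rel J)"
    using comm_sub_base[OF f k] unfolding comm_subgroup_def by (rule gen_subgroup.inv)
  then show ?thesis using k f by (simp add: minv_mcomm E_rel_GL)
qed

lemma comm_sub_one: "mat 1 \<in> comm_subgroup (E_rel I) (E_rel J)"
  unfolding comm_subgroup_def by (rule gen_subgroup.one)
lemma comm_sub_mult: "x \<in> comm_subgroup (E_rel I) (E_rel J) \<Longrightarrow> y \<in> comm_subgroup (E_rel I) (E_rel J)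
   \<Longrightarrow> x ** y \<in> comm_subgroup (E_rel I) (E_rel J)"
  unfolding comm_subgroup_def by (rule gen_subgroup.mult)
lemma comm_sub_minv: "x \<in> comm_subgroup (E_rel I) (E_rel J) \<Longrightarrow> minv x \<in> comm_subgroup (E_rel I) (E_rel J)"
  unfolding comm_subgroup_def by (rule gen_subgroup.inv)

lemma comm_sub_trans:
  assumes "CARD('n::finite) \<ge> 3" "i \<noteq> j" "q \<in> I" "a \<in> J"
  shows "(transvection i j (a*q) :: 'a::comm_ring_1^'n^'n) \<in> comm_subgroup (E_rel I) (E_rel J)"
proof -
  obtain h :: 'n where h: "h \<noteq> i" "h \<noteq> j" using exists_third[OF assms(1)] by blast
  have "mcomm (transvection i h q) (transvection h j a) = (transvection i j (q*a) :: 'a^'n^'n)"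
    using h assms by (intro transvection_comm) auto
  moreover have "mcomm (transvection i h q) (transvection h j a) \<in> comm_subgroup (E_rel I) (E_rel J)"
    using h assms by (intro comm_sub_base E_ideal_rel transvection_E_ideal) auto
  ultimately show ?thesis by (simp add: mult.commute)
qed



definition zz :: "'a::comm_ring_1^'n::finite \<Rightarrow> 'n \<Rightarrow> 'n \<Rightarrow> 'a^'n" where
  "zz u k l = axis l (u$k) - axis k (u$l)"

lemma dotv_zz: "dotv u (zz u k l) = 0"
  by (simp add: zz_def dotv_diff_right dotv_axis_right mult.commute)

lemma zz_same[simp]: "zz u k k = 0"
  by (simp add: zz_def)

lemma zz_nth: "zz u k l $ m = (if m = l then u$k else 0) - (if m = k then u$l else 0)"
  by (simp add: zz_def axis_def)

lemma smult_sum: "(c::'a::comm_ring_1) *s (\<Sum>x\<in>S. f x) = (\<Sum>x\<in>S. c *s f x)"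
  by (simp add: vec_eq_iff vector_scalar_mult_def sum_component sum_distrib_left sum_distrib_right)

lemma smult_smult: "c *s (d *s v) = (c * d) *s (v::'a::comm_ring_1^'n)"
  by (simp add: vec_eq_iff vector_scalar_mult_def mult.assoc)

lemma E1_smult_move: "E1 (c *s p) (d *s w) = E1 ((c*d) *s p) w"
  by (simp add: E1_def outer_def vector_scalar_mult_def vec_eq_iff algebra_simps)

lemma p_decomp:
  fixes u c p :: "'a::comm_ring_1^'n::finite"
  assumes uc: "dotv u c = 1" and up: "dotv u p = 0"
  shows "(\<Sum>(k,l)\<in>UNIV\<times>UNIV. (c$k * p$l) *s zz u k l) = p"
proof -
  have "(\<Sum>(k,l)\<in>UNIV\<times>UNIV. (c$k * p$l) *s zz u k l) $ m = p $ m" for m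
  proof -
    have "(\<Sum>(k,l)\<in>UNIV\<times>UNIV. (c$k * p$l) *s zz u k l) $ m
        = (\<Sum>(k,l)\<in>UNIV\<times>UNIV. (c$k * p$l) * zz u k l $ m)"
      by (simp add: sum_component case_prod_beta)
    also have "\<dots> = (\<Sum>k\<in>UNIV. \<Sum>l\<in>UNIV. (c$k * p$l) * zz u k l $ m)"
      by (simp add: sum.cartesian_product)
    also have "\<dots> = (\<Sum>k\<in>UNIV. \<Sum>l\<in>UNIV. (if l = m then c$k * p$m * u$k else 0)
                       - (if k = m then c$m * p$l * u$l else 0))"
      by (intro sum.cong refl) (auto simp: zz_nth algebra_simps)
    also have "\<dots> = (\<Sum>k\<in>UNIV. c$k * p$m * u$k) - (\<Sum>l\<in>UNIV. c$m * p$l * u$l)"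
      by (simp add: sum_subtractf if_distrib[of "\<lambda>x. \<Sum>l\<in>UNIV. x"] sum.swap[of "\<lambda>k l. if k = m then _ l else 0"])
    also have "\<dots> = p$m * dotv u c - c$m * dotv u p"
      by (simp add: dotv_def sum_distrib_left algebra_simps)
    finally show ?thesis using uc up by simp
  qed
  then show ?thesis by (simp add: vec_eq_iff)
qed

lemma zz_smult_split: "(b::'a::comm_ring_1) *s zz u k l = axis l (b*u$k) + axis k (-(b*u$l))"
  by (simp add: vec_eq_iff zz_def axis_def vector_scalar_mult_def)

lemma zz_h: "h \<noteq> k \<Longrightarrow> h \<noteq> l \<Longrightarrow> zz u k l $ h = 0"
  by (simp add: zz_nth)

lemma dotv_u'_zz: "h \<noteq> k \<Longrightarrow> h \<noteq> l \<Longrightarrow> dotv (u - axis h (u$h)) (zz u k l) = 0"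
  by (simp add: dotv_diff_left dotv_zz dotv_axis_left zz_h)

lemma GI:
  assumes "x1 \<in> GL" "x2 \<in> GL" "y1 \<in> GL" "y2 \<in> GL"
  shows "mcomm (x1 ** x2) (y1 ** y2) = x1 ** mcomm x2 y1 ** (y1 ** mcomm x2 y2 ** minv y1)
           ** ((y1 ** y2) ** minv x1 ** minv (y1 ** y2))"
  using assms unfolding mcomm_def by (simp add: GL_simps)

lemma mulv_axis: "(M::'a::comm_ring_1^'n::finite^'m) *v axis i x = x *s (\<chi> k. M$k$i)"
proof -
  have "\<And>k. (\<Sum>j\<in>UNIV. M$k$j * axis i x $ j) = x * M$k$i"
  proof -
    fix k
    have "(\<Sum>j\<in>UNIV. M$k$j * axis i x $ j) = (\<Sum>j\<in>UNIV. if j = i then x * M$k$i else 0)"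
      by (rule sum.cong) (auto simp: axis_def mult.commute)
    then show "(\<Sum>j\<in>UNIV. M$k$j * axis i x $ j) = x * M$k$i" by simp
  qed
  then show ?thesis by (simp add: matrix_vector_mult_def vector_scalar_mult_def vec_eq_iff)
qed

lemma axis_vmul: "axis j x v* (M::'a::comm_ring_1^'n::finite^'m::finite) = x *s (M$j)"
proof -
  have "\<And>k. (\<Sum>i\<in>UNIV. axis j x $ i * M$i$k) = x * M$j$k"
  proof -
    fix k
    have "(\<Sum>i\<in>UNIV. axis j x $ i * M$i$k) = (\<Sum>i\<in>UNIV. if i = j then x * M$j$k else 0)"
      by (rule sum.cong) (auto simp: axis_def)
    then show "(\<Sum>i\<in>UNIV. axis j x $ i * M$i$k) = x * M$j$k" by simp
  qed
  then show ?thesis by (simp add: vector_matrix_mult_def vector_scalar_mult_def vec_eq_iff)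
qed

lemma neg_axis: "- axis i x = axis i (-x::'a::comm_ring_1)"
  by (simp add: vec_eq_iff axis_def)

lemma minv_transvection: "i \<noteq> j \<Longrightarrow> minv (transvection i j x) = transvection i j (-x)"
  by (simp add: transvection_E1 minv_E1 dotv_axis_left neg_axis)

lemma transvection_add: "i \<noteq> j \<Longrightarrow> transvection i j x ** transvection i j y = transvection i j (x+y)"
proof -
  assume ij: "i \<noteq> j"
  have "E1 (axis i x) (axis j 1) ** E1 (axis i y) (axis j 1) = E1 (axis i x + axis i y) (axis j 1)"
    using ij by (simp add: E1_same_w dotv_axis_left)
  moreover have "axis i x + axis i y = axis i (x+y)" by (simp add: vec_eq_iff axis_def)
  ultimately show ?thesis by (simp add: transvection_E1)
qed

definition mI :: "'a::comm_ring_1 set \<Rightarrow> 'a^'n::finite^'n \<Rightarrow> bool" where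
  "mI I M \<longleftrightarrow> (\<forall>k l. M$k$l \<in> I)"

lemma ideal_sum: "is_ideal I \<Longrightarrow> (\<And>x. x \<in> S \<Longrightarrow> f x \<in> I) \<Longrightarrow> sum f S \<in> I"
  by (induction S rule: infinite_finite_induct) (auto intro: ideal_zero ideal_add)

lemma mI_mult_left: "is_ideal I \<Longrightarrow> mI I M \<Longrightarrow> mI I (N ** M)"
  unfolding mI_def matrix_matrix_mult_def by (auto intro!: ideal_sum ideal_mult_left)
lemma mI_mult_right: "is_ideal I \<Longrightarrow> mI I M \<Longrightarrow> mI I (M ** N)"
  unfolding mI_def matrix_matrix_mult_def by (auto intro!: ideal_sum ideal_mult_right)

lemma mat_comm: "(M::'a::comm_ring_1^'n::finite^'n) ** mat c = mat c ** M"
proof -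
  have l: "(M ** mat c)$k$l = M$k$l * c" for k l
  proof -
    have "(M ** mat c)$k$l = (\<Sum>j\<in>UNIV. M$k$j * (if j = l then c else 0))"
      by (simp add: matrix_matrix_mult_def mat_def)
    also have "\<dots> = (\<Sum>j\<in>UNIV. if j = l then M$k$l * c else 0)"
      by (rule sum.cong) auto
    finally show ?thesis by simp
  qed
  have r: "(mat c ** M)$k$l = c * M$k$l" for k l
  proof -
    have "(mat c ** M)$k$l = (\<Sum>j\<in>UNIV. (if k = j then c else 0) * M$j$l)"
      by (simp add: matrix_matrix_mult_def mat_def)
    also have "\<dots> = (\<Sum>j\<in>UNIV. if j = k then c * M$k$l else 0)"
      by (rule sum.cong) auto
    finally show ?thesis by simp
  qed
  show ?thesis using l r by (simp add: vec_eq_iff mult.commute)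
qed

lemma mm_diff_l: "(A::'a::comm_ring_1^'n::finite^'n) ** (B - C) = A ** B - A ** C"
  by (simp add: matrix_matrix_mult_def vec_eq_iff sum_subtractf algebra_simps)
lemma mm_diff_r: "((A::'a::comm_ring_1^'n::finite^'n) - B) ** C = A ** C - B ** C"
  by (simp add: matrix_matrix_mult_def vec_eq_iff sum_subtractf algebra_simps)

lemma fc_char1:
  assumes I: "is_ideal I" and g: "g \<in> full_congruence I"
  shows "mI I (g - mat (g$k0$k0))"
  unfolding mI_def
proof (intro allI)
  fix k l
  show "(g - mat (g$k0$k0))$k$l \<in> I"
  proof (cases "k = l")
    case True
    then show ?thesis using g I
      by (cases "k = k0") (auto simp: full_congruence_def mat_def ideal_zero)
  next
    case False
    then show ?thesis using g by (auto simp: full_congruence_def mat_def)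
  qed
qed

lemma fc_char2:
  fixes g :: "'a::comm_ring_1^'n::finite^'n"
  assumes I: "is_ideal I" and g: "g \<in> GL" and m: "mI I (g - mat lam)"
  shows "g \<in> full_congruence I"
  unfolding full_congruence_def
proof (intro CollectI conjI allI impI g)
  fix i j :: 'n assume ij: "i \<noteq> j"
  from m ij have "(g - mat lam)$i$j \<in> I" unfolding mI_def by blast
  then show "g$i$j \<in> I" using ij by (simp add: mat_def)
  from m have "(g - mat lam)$i$i - (g - mat lam)$j$j \<in> I" unfolding mI_def
    using I ideal_diff by blast
  then show "g$i$i - g$j$j \<in> I" by (simp add: mat_def)
qed

lemma fc_GL: "g \<in> full_congruence I \<Longrightarrow> g \<in> GL"
  by (simp add: full_congruence_def)

lemma fc_conj:
  assumes I: "is_ideal I" and x: "x \<in> GL" and g: "g \<in> full_congruence I"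
  shows "x ** g ** minv x \<in> full_congruence I"
proof -
  let ?l = "g$k0$k0"
  have "x ** g ** minv x - mat ?l = x ** (g - mat ?l) ** minv x"
    using x by (simp add: mm_diff_l mm_diff_r mat_comm GL_simps)
  moreover have "mI I (x ** (g - mat ?l) ** minv x)"
    using fc_char1[OF I g] I by (intro mI_mult_left mI_mult_right)
  ultimately show ?thesis using fc_GL[OF g] x
    by (intro fc_char2[OF I, of _ ?l]) (simp_all add: GL_simps)
qed

lemma mat_left_entry: "(mat c ** (M::'a::comm_ring_1^'n::finite^'n))$k$l = c * M$k$l"
proof -
  have "(mat c ** M)$k$l = (\<Sum>j\<in>UNIV. (if k = j then c else 0) * M$j$l)"
    by (simp add: matrix_matrix_mult_def mat_def)
  also have "\<dots> = (\<Sum>j\<in>UNIV. if j = k then c * M$k$l else 0)"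
    by (rule sum.cong) auto
  finally show ?thesis by simp
qed

lemma fc_minv:
  fixes g :: "'a::comm_ring_1^'n::finite^'n"
  assumes I: "is_ideal I" and g: "g \<in> full_congruence I"
  shows "minv g \<in> full_congruence I"
proof -
  let ?l = "g$k0$k0" and ?G = "minv g"
  let ?N = "g - mat ?l"
  have gG: "g \<in> GL" using g by (rule fc_GL)
  have N: "mI I ?N" using fc_char1[OF I g] .
  have GN: "mI I (?G ** ?N)" by (rule mI_mult_left[OF I N])
  have eq: "?G ** ?N = mat 1 - mat ?l ** ?G"
    using gG by (simp add: mm_diff_l GL_simps mat_comm)
  have key: "?l * ?G$k$l = (if k = l then 1 else 0) - (?G ** ?N)$k$l" for k l
  proof -
    have "(?G ** ?N)$k$l = (mat 1 - mat ?l ** ?G)$k$l" using eq by simp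
    also have "\<dots> = (mat 1 :: 'a^'n^'n)$k$l - ?l * ?G$k$l" by (simp add: mat_left_entry)
    finally show ?thesis by (simp add: mat_def)
  qed
  let ?m = "?G$k0$k0"
  have one: "1 - ?l * ?m \<in> I" using key[of k0 k0] GN unfolding mI_def by simp
  have div: "d \<in> I" if "?l * d \<in> I" for d
  proof -
    have "d = (1 - ?l * ?m) * d + ?m * (?l * d)" by (simp add: algebra_simps)
    moreover have "(1 - ?l * ?m) * d \<in> I" by (rule ideal_mult_right[OF I one])
    moreover have "?m * (?l * d) \<in> I" using that I by (simp add: ideal_mult_left)
    ultimately show ?thesis using I ideal_add by metis
  qed
  show ?thesis unfolding full_congruence_def
  proof (intro CollectI conjI allI impI GL_minv gG)
    fix i j :: 'n assume ij: "i \<noteq> j"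
    have "?l * ?G$i$j = - (?G ** ?N)$i$j" using key[of i j] ij by simp
    then have "?l * ?G$i$j \<in> I" using GN I ideal_neg unfolding mI_def by metis
    then show "?G$i$j \<in> I" by (rule div)
    have "?l * (?G$i$i - ?G$j$j) = (?G ** ?N)$j$j - (?G ** ?N)$i$i"
      using key[of i i] key[of j j] by (simp add: algebra_simps)
    then have "?l * (?G$i$i - ?G$j$j) \<in> I" using GN I ideal_diff unfolding mI_def by metis
    then show "?G$i$i - ?G$j$j \<in> I" by (rule div)
  qed
qed


definition lev :: "'a::comm_ring_1 set \<Rightarrow> ('a^'n::finite^'n) set" where
  "lev I = {h \<in> GL. mI I (h - mat 1)}"

lemma mI_diff: "is_ideal I \<Longrightarrow> mI I X \<Longrightarrow> mI I Y \<Longrightarrow> mI I (X - Y)"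
  unfolding mI_def by (auto intro: ideal_diff)
lemma mI_add: "is_ideal I \<Longrightarrow> mI I X \<Longrightarrow> mI I Y \<Longrightarrow> mI I (X + Y)"
  unfolding mI_def by (auto intro: ideal_add)

lemma lev_mult:
  assumes I: "is_ideal I" and x: "x \<in> lev I" and y: "y \<in> lev I"
  shows "x ** y \<in> lev I"
proof -
  have eq: "x ** y - mat 1 = (x - mat 1) ** (y - mat 1) + (x - mat 1) + (y - mat 1)"
    by (simp add: mm_diff_l mm_diff_r algebra_simps)
  have X: "mI I (x - mat 1)" "x \<in> GL" and Y: "mI I (y - mat 1)" "y \<in> GL" using x y by (auto simp: lev_def)
  have "mI I (x ** y - mat 1)" unfolding eq
    by (intro mI_add[OF I] mI_mult_left[OF I] X Y)
  then show ?thesis using X Y by (simp add: lev_def GL_mult)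
qed

lemma lev_minv:
  assumes I: "is_ideal I" and x: "x \<in> lev I"
  shows "minv x \<in> lev I"
proof -
  have xG: "x \<in> GL" using x by (simp add: lev_def)
  have eq: "minv x - mat 1 = mat 0 - minv x ** (x - mat 1)"
    using xG by (simp add: mm_diff_l GL_simps)
  have z: "mI I (mat 0 :: 'a^'n^'n)" using I by (simp add: mI_def mat_def ideal_zero)
  have X: "mI I (x - mat 1)" using x by (simp add: lev_def)
  have "mI I (minv x - mat 1)" unfolding eq
    by (intro mI_diff[OF I] mI_mult_left[OF I] X z)
  then show ?thesis using xG by (simp add: lev_def GL_minv)
qed

lemma lev_one: "is_ideal I \<Longrightarrow> mat 1 \<in> lev I"
  by (simp add: lev_def mI_def ideal_zero)

lemma E_ideal_lev:
  assumes I: "is_ideal I" and x: "x \<in> E_ideal I"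
  shows "x \<in> lev I"
  using x unfolding E_ideal_def
proof (induction x rule: gen_subgroup.induct)
  case one then show ?case by (rule lev_one[OF I])
next
  case (base s)
  then obtain i j \<xi> where s: "s = transvection i j \<xi>" "i \<noteq> j" "\<xi> \<in> I" by blast
  have "mI I (s - mat 1)" using s I
    unfolding mI_def by (simp add: transvection_def ideal_zero)
  then show ?case using s by (simp add: lev_def transvection_GL)
next
  case (mult x y) then show ?case using lev_mult[OF I] by blast
next
  case (inv x) then show ?case using lev_minv[OF I] by blast
qed

lemma E_rel_lev:
  assumes I: "is_ideal I" and x: "x \<in> E_rel I"
  shows "x \<in> lev I"
  using x unfolding E_rel_def
proof (induction x rule: gen_subgroup.induct)
  case one then show ?case by (rule lev_one[OF I])
next
  case (base s)
  then obtain g x where s: "s = g ** x ** minv g" "g \<in> E_ideal UNIV" "x \<in> E_ideal I" by blast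
  have gG: "g \<in> GL" using s(2) by (rule E_ideal_GL)
  have xl: "x \<in> lev I" using E_ideal_lev[OF I s(3)] .
  have "s - mat 1 = g ** (x - mat 1) ** minv g"
    using gG by (simp add: s mm_diff_l mm_diff_r GL_simps)
  moreover have "mI I (g ** (x - mat 1) ** minv g)" using xl
    unfolding lev_def by (intro mI_mult_left[OF I] mI_mult_right[OF I]) simp
  ultimately have "mI I (s - mat 1)" by simp
  moreover have "s \<in> GL" using xl gG by (simp add: s lev_def GL_mult GL_minv)
  ultimately show ?case by (simp add: lev_def)
next
  case (mult x y) then show ?case using lev_mult[OF I] by blast
next
  case (inv x) then show ?case using lev_minv[OF I] by blast
qed

context
  fixes A B :: "'a::comm_ring_1 set"
  assumes idA: "is_ideal A" and idB: "is_ideal B"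
begin

abbreviation "QQ \<equiv> ideal_quot B A"

lemma idQ: "is_ideal QQ" using idB by (rule ideal_quot_ideal)

lemma quot_mem: "q \<in> QQ \<Longrightarrow> a \<in> A \<Longrightarrow> q * a \<in> B"
  by (simp add: ideal_quot_def)

lemma P2:
  assumes card3: "CARD('n::finite) \<ge> 3" and hk: "h \<noteq> k" "h \<noteq> l" and a: "a \<in> A" and r: "r * u$h \<in> QQ"
  shows "E1 ((a*r) *s zz u k l) (axis h (u$h)) \<in> (comm_subgroup (E_rel QQ) (E_rel A) :: ('a^'n^'n) set)"
proof -
  have "E1 ((a*r) *s zz u k l) (axis h (u$h)) =
     E1 (axis l (a*r*u$k)) (axis h (u$h)) ** E1 (axis k (-(a*r*u$l))) (axis h (u$h))"
    using hk by (simp add: zz_smult_split E1_same_w dotv_axis_left)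
  also have "\<dots> = transvection l h (a * (r*u$h*u$k)) ** transvection k h (a * (-(r*u$h*u$l)))"
    by (simp add: E1_axis_axis algebra_simps)
  finally have eq: "E1 ((a*r) *s zz u k l) (axis h (u$h)) = \<dots>" .
  have q1: "r*u$h*u$k \<in> QQ" using r idQ ideal_mult_right by blast
  have q2: "-(r*u$h*u$l) \<in> QQ" using r idQ ideal_mult_right ideal_neg by blast
  show ?thesis unfolding eq
    by (intro comm_sub_mult comm_sub_trans card3 a q1 q2) (use hk in auto)
qed

lemma P1:
  assumes hk: "h \<noteq> k" "h \<noteq> l" and a: "a \<in> A" and r: "r \<in> QQ"
  shows "E1 ((a*r) *s zz u k l) (u - axis h (u$h)) \<in> (comm_subgroup (E_rel QQ) (E_rel A) :: ('a^'n::finite^'n) set)"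
proof -
  let ?u' = "u - axis h (u$h)"
  have "mcomm (E1 (a *s zz u k l) (axis h 1)) (E1 (axis h 1) (r *s ?u')) = E1 (a *s zz u k l) (r *s ?u')"
    by (rule E1_comm) (use hk in \<open>simp_all add: dotv_axis_left dotv_axis_right dotv_smult_left
          dotv_smult_right dotv_u'_zz zz_h dotv_diff_left dotv_zz\<close>)
  then have eq: "E1 ((a*r) *s zz u k l) ?u' = mcomm (E1 (a *s zz u k l) (axis h 1)) (E1 (axis h 1) (r *s ?u'))"
    by (simp add: E1_smult_move del: vector_ssub_ldistrib)
  have x: "E1 (a *s zz u k l) (axis h 1) \<in> E_rel A"
    by (intro E_ideal_rel col_E) (use hk a idA ideal_mult_right in \<open>auto simp: zz_h\<close>)
  have y: "E1 (axis h 1) (r *s ?u') \<in> E_rel QQ"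
    by (intro E_ideal_rel row_E) (use r idQ ideal_mult_right in \<open>auto simp: vector_scalar_mult_def\<close>)
  show ?thesis unfolding eq using x y by (rule comm_sub_rev)
qed

lemma Pgen:
  assumes card3: "CARD('n::finite) \<ge> 3" and a: "a \<in> A" and r: "r \<in> QQ"
  shows "E1 ((a*r) *s zz u k l) u \<in> (comm_subgroup (E_rel QQ) (E_rel A) :: ('a^'n^'n) set)"
proof -
  obtain h :: 'n where hk: "h \<noteq> k" "h \<noteq> l" using exists_third[OF card3] by blast
  have "E1 ((a*r) *s zz u k l) u = E1 ((a*r) *s zz u k l) ((u - axis h (u$h)) + axis h (u$h))" by simp
  also have "\<dots> = E1 ((a*r) *s zz u k l) (u - axis h (u$h)) ** E1 ((a*r) *s zz u k l) (axis h (u$h))"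
    using hk by (subst E1_same_p) (simp_all add: dotv_smult_right dotv_u'_zz)
  finally show ?thesis
    using P1[OF hk a r] P2[OF card3 hk a] r idQ ideal_mult_right by (metis comm_sub_mult)
qed

lemma SP:
  assumes card3: "CARD('n::finite) \<ge> 3" and ij: "i \<noteq> j" and a: "a \<in> A"
    and uQ: "\<And>m. m \<noteq> j \<Longrightarrow> u$m \<in> QQ" and key: "1 + r * (u$j * u$j) \<in> QQ"
  shows "transvection i j a ** E1 ((a*r) *s zz u j i) u \<in> (comm_subgroup (E_rel QQ) (E_rel A) :: ('a^'n^'n) set)"
proof -
  let ?H = "comm_subgroup (E_rel QQ) (E_rel A) :: ('a^'n^'n) set"
  obtain h :: 'n where hi: "h \<noteq> i" "h \<noteq> j" using exists_third[OF card3] by blast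
  let ?u' = "u - axis h (u$h)"
  let ?t = "transvection i j a :: 'a^'n^'n"
  define F1 where "F1 = (E1 ((a*r) *s zz u j i) ?u' :: 'a^'n^'n)"
  define F2 where "F2 = (E1 ((a*r) *s zz u j i) (axis h (u$h)) :: 'a^'n^'n)"
  have Fsplit: "E1 ((a*r) *s zz u j i) u = F1 ** F2"
  proof -
    have "E1 ((a*r) *s zz u j i) u = E1 ((a*r) *s zz u j i) (?u' + axis h (u$h))" by simp
    also have "\<dots> = F1 ** F2" unfolding F1_def F2_def
      using hi by (subst E1_same_p) (simp_all add: dotv_smult_right dotv_u'_zz)
    finally show ?thesis .
  qed
  have uh: "u$h \<in> QQ" using uQ hi by blast
  have F2H: "F2 \<in> ?H" unfolding F2_def
    by (rule P2[OF card3 hi(2) hi(1) a]) (rule ideal_mult_left[OF idQ uh])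
  define W where "W = r *s ?u'"
  define Wt where "Wt = W - axis j (W$j)"
  define \<alpha> where "\<alpha> = a * u$j"
  define \<beta> where "\<beta> = -(a * u$i)"
  define x1 where "x1 = (transvection j h \<beta> :: 'a^'n^'n)"
  define x2 where "x2 = (transvection i h \<alpha> :: 'a^'n^'n)"
  define y1 where "y1 = (E1 (axis h 1) Wt :: 'a^'n^'n)"
  define y2 where "y2 = (transvection h j (W$j) :: 'a^'n^'n)"
  have Wh: "W$h = 0" by (simp add: W_def vector_scalar_mult_def)
  have Wth: "Wt$h = 0" using hi by (simp add: Wt_def Wh)
  have Wj: "W$j = r * u$j" using hi by (simp add: W_def vector_scalar_mult_def)
  have Wti: "Wt$i = r * u$i" using hi ij by (simp add: Wt_def W_def vector_scalar_mult_def)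
  have WtQ: "Wt$m \<in> QQ" for m
  proof (cases "m = j")
    case True then show ?thesis by (simp add: Wt_def ideal_zero[OF idQ])
  next
    case False
    then have "Wt$m = r * (u$m - axis h (u$h) $ m)" by (simp add: Wt_def W_def vector_scalar_mult_def)
    moreover have "u$m - axis h (u$h) $ m \<in> QQ"
      using uQ[OF False] uh idQ by (cases "m = h") (auto intro: ideal_diff ideal_zero)
    ultimately show ?thesis using idQ ideal_mult_left by metis
  qed
  have F1_comm: "F1 = mcomm (E1 (a *s zz u j i) (axis h 1)) (E1 (axis h 1) W)"
  proof -
    have "mcomm (E1 (a *s zz u j i) (axis h 1)) (E1 (axis h 1) W) = E1 (a *s zz u j i) W"
      unfolding W_def
      by (rule E1_comm) (use hi in \<open>simp_all add: dotv_axis_left dotv_axis_right dotv_smult_left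
          dotv_smult_right dotv_u'_zz zz_h dotv_diff_left dotv_zz\<close>)
    then show ?thesis unfolding F1_def W_def by (simp add: E1_smult_move del: vector_ssub_ldistrib)
  qed
  have x_eq: "E1 (a *s zz u j i) (axis h 1) = x1 ** x2"
  proof -
    have "a *s zz u j i = axis j \<beta> + axis i \<alpha>"
      by (simp add: zz_smult_split \<alpha>_def \<beta>_def add.commute)
    then show ?thesis unfolding x1_def x2_def
      using hi by (simp add: E1_same_w dotv_axis_left transvection_E1)
  qed
  have y_eq: "E1 (axis h 1) W = y1 ** y2"
  proof -
    have "E1 (axis h 1) W = E1 (axis h 1) (Wt + axis j (W$j))" by (simp add: Wt_def)
    also have "\<dots> = y1 ** E1 (axis h 1) (axis j (W$j))" unfolding y1_def
      using hi Wth by (subst E1_same_p) (simp_all add: dotv_axis_right)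
    also have "E1 (axis h 1) (axis j (W$j)) = y2" by (simp add: y2_def E1_axis_axis)
    finally show ?thesis .
  qed
  have x1G: "x1 \<in> GL" "x2 \<in> GL" "y2 \<in> GL" unfolding x1_def x2_def y2_def
    using hi ij by (auto intro: transvection_GL)
  have y1G: "y1 \<in> GL" unfolding y1_def by (rule E1_GL) (simp add: dotv_axis_right Wth)
  have my1: "minv y1 = E1 (- axis h 1) Wt" unfolding y1_def by (rule minv_E1) (simp add: dotv_axis_right Wth)
  define \<gamma> where "\<gamma> = \<alpha> * W$j"
  define \<delta> where "\<delta> = Wt$i * \<gamma>"
  have c2: "mcomm x2 y2 = transvection i j \<gamma>" unfolding x2_def y2_def \<gamma>_def
    using hi ij by (intro transvection_comm) auto
  have c3: "y1 ** transvection i j \<gamma> ** minv y1 = transvection i j \<gamma> ** transvection h j \<delta>"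
  proof -
    have "y1 ** transvection i j \<gamma> ** minv y1 = E1 (y1 *v axis i \<gamma>) (axis j 1 v* minv y1)"
      unfolding transvection_E1 by (rule E1_conj) (rule GL_inv(1)[OF y1G])
    also have "y1 *v axis i \<gamma> = axis i \<gamma> + axis h \<delta>"
      unfolding y1_def \<delta>_def E1_mulv dotv_axis_right by (simp add: vec_eq_iff axis_def vector_scalar_mult_def)
    also have "axis j 1 v* minv y1 = axis j 1"
      unfolding my1 using hi by (simp add: vmul_E1 dotv_axis_left)
    also have "E1 (axis i \<gamma> + axis h \<delta>) (axis j 1) = transvection i j \<gamma> ** transvection h j \<delta>"
      using hi by (simp add: transvection_E1 E1_same_w dotv_axis_left)
    finally show ?thesis .
  qed
  define M where "M = mcomm x2 y1"
  define V where "V = (y1 ** y2) ** minv x1 ** minv (y1 ** y2)"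
  have F1_eq: "F1 = x1 ** M ** (transvection i j \<gamma> ** transvection h j \<delta>) ** V"
    unfolding F1_comm x_eq y_eq M_def V_def GI[OF x1G(1,2) y1G x1G(3)] c2 c3 ..
  have tinv: "minv ?t = transvection i j (-a)" using ij by (rule minv_transvection)
  have "?t ** E1 ((a*r) *s zz u j i) u = ?t ** (x1 ** M ** (transvection i j \<gamma> ** transvection h j \<delta>) ** V) ** F2"
    by (simp add: Fsplit F1_eq matrix_mul_assoc)
  also have "\<dots> = (?t ** (x1 ** M) ** minv ?t) ** (transvection i j (a + \<gamma>) ** transvection h j \<delta>) ** V ** F2"
  proof -
    have "transvection i j \<gamma> = minv ?t ** transvection i j (a + \<gamma>)"
      unfolding tinv using ij by (simp add: transvection_add)
    then show ?thesis by (simp add: matrix_mul_assoc)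
  qed
  finally have Teq: "?t ** E1 ((a*r) *s zz u j i) u = \<dots>" .
  have tE: "?t \<in> E_ideal UNIV" using ij by (simp add: transvection_E_ideal)
  have x1H: "x1 \<in> ?H" unfolding x1_def \<beta>_def
    using comm_sub_trans[OF card3 hi(2)[symmetric] ideal_neg[OF idQ uQ[OF ij]] a]
    by simp
  have x2A: "x2 \<in> E_rel A" unfolding x2_def \<alpha>_def
    using hi ij by (intro E_ideal_rel transvection_E_ideal) (auto intro: ideal_mult_right[OF idA a])
  have y1Q: "y1 \<in> E_rel QQ" unfolding y1_def
    by (intro E_ideal_rel row_E Wth WtQ)
  have MH: "M \<in> ?H" unfolding M_def using x2A y1Q by (rule comm_sub_rev)
  have part1: "?t ** (x1 ** M) ** minv ?t \<in> ?H"
    using tE comm_sub_mult[OF x1H MH] by (rule comm_sub_conj)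
  have part2: "transvection i j (a + \<gamma>) \<in> ?H"
  proof -
    have "a + \<gamma> = a * (1 + r * (u$j * u$j))" by (simp add: \<gamma>_def \<alpha>_def Wj algebra_simps)
    then show ?thesis using comm_sub_trans[OF card3 ij key a] by simp
  qed
  have part3: "transvection h j \<delta> \<in> ?H"
  proof -
    have "\<delta> = a * (u$i * (r * u$j * (r * u$j)))" by (simp add: \<delta>_def \<gamma>_def \<alpha>_def Wj Wti algebra_simps)
    moreover have q: "u$i * (r * u$j * (r * u$j)) \<in> QQ" using uQ[OF ij] idQ ideal_mult_right by blast
    ultimately show ?thesis using comm_sub_trans[OF card3 hi(2) q a] by simp
  qed
  have yE: "y1 ** y2 \<in> E_ideal UNIV"
    unfolding y_eq[symmetric] by (rule row_E) (simp_all add: Wh)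
  have part4: "V \<in> ?H" unfolding V_def
    using yE comm_sub_minv[OF x1H] by (rule comm_sub_conj)
  show ?thesis unfolding Teq
    by (intro comm_sub_mult part1 part2 part3 part4 F2H)
qed

lemma main_trans:
  fixes g :: "'a^'n::finite^'n"
  assumes card3: "CARD('n) \<ge> 3" and g: "g \<in> full_congruence QQ" and ij: "i \<noteq> j" and a: "a \<in> A"
  shows "mcomm (transvection i j a) g \<in> comm_subgroup (E_rel QQ) (E_rel A)"
proof -
  let ?H = "comm_subgroup (E_rel QQ) (E_rel A) :: ('a^'n^'n) set"
  let ?t = "transvection i j a :: 'a^'n^'n"
  have gG: "g \<in> GL" using g by (rule fc_GL)
  define G where "G = minv g"
  have GQ: "G \<in> full_congruence QQ" unfolding G_def by (rule fc_minv[OF idQ g])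
  define p where "p = (\<chi> k. g$k$i)"
  define c where "c = (\<chi> k. g$k$j)"
  define u where "u = G$j"
  have Gg: "G ** g = mat 1" unfolding G_def by (rule GL_inv(2)[OF gG])
  have uc: "dotv u c = 1"
  proof -
    have "dotv u c = (G ** g)$j$j" by (simp add: dotv_def u_def c_def matrix_matrix_mult_def)
    then show ?thesis using Gg by (simp add: mat_def)
  qed
  have up: "dotv u p = 0"
  proof -
    have "dotv u p = (G ** g)$j$i" by (simp add: dotv_def u_def p_def matrix_matrix_mult_def)
    then show ?thesis using Gg ij by (simp add: mat_def)
  qed
  have uQ: "u$m \<in> QQ" if "m \<noteq> j" for m
    using GQ that unfolding u_def full_congruence_def by auto
  have cQ: "c$k \<in> QQ" if "k \<noteq> j" for k
    using g that unfolding c_def full_congruence_def by auto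
  have pQ: "p$l \<in> QQ" if "l \<noteq> i" for l
    using g that unfolding p_def full_congruence_def by auto
  define r where "r = - (c$j * p$i)"
  have key: "1 + r * (u$j * u$j) \<in> QQ"
  proof -
    define \<sigma> where "\<sigma> = u$j * c$j"
    have "1 = u$j * c$j + (\<Sum>k\<in>UNIV - {j}. u$k * c$k)"
      using uc unfolding dotv_def by (simp add: sum.remove)
    moreover have "(\<Sum>k\<in>UNIV - {j}. u$k * c$k) \<in> QQ"
      by (rule ideal_sum[OF idQ]) (auto intro: ideal_mult_right[OF idQ] uQ)
    ultimately have e1: "1 - \<sigma> \<in> QQ" unfolding \<sigma>_def by (metis add_diff_cancel_left')
    have "p$i - c$j \<in> QQ" using g ij unfolding p_def c_def full_congruence_def by auto
    then have e2: "(p$i - c$j) * u$j \<in> QQ" by (rule ideal_mult_right[OF idQ])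
    have "1 + r * (u$j * u$j) = (1 - \<sigma>) * (1 + \<sigma>) - \<sigma> * ((p$i - c$j) * u$j)"
      by (simp add: r_def \<sigma>_def algebra_simps)
    then show ?thesis using e1 e2 idQ by (metis ideal_diff ideal_mult_left ideal_mult_right)
  qed
  have step1: "mcomm ?t g = ?t ** E1 ((-a) *s p) u"
  proof -
    have "mcomm ?t g = ?t ** (g ** E1 (axis i (-a)) (axis j 1) ** G)"
      unfolding mcomm_def G_def minv_transvection[OF ij] by (simp add: transvection_E1 matrix_mul_assoc)
    also have "g ** E1 (axis i (-a)) (axis j 1) ** G = E1 (g *v axis i (-a)) (axis j 1 v* G)"
      by (rule E1_conj) (simp add: G_def GL_inv(1)[OF gG])
    also have "\<dots> = E1 ((-a) *s p) u" by (simp add: mulv_axis axis_vmul p_def u_def)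
    finally show ?thesis .
  qed
  define f where "f = (\<lambda>(k,l). ((-a) * (c$k * p$l)) *s zz u k l)"
  let ?S = "UNIV \<times> UNIV :: ('n \<times> 'n) set"
  have sumf: "(-a) *s p = (\<Sum>x\<in>?S. f x)"
  proof -
    have "(-a) *s p = (-a) *s (\<Sum>(k,l)\<in>?S. (c$k * p$l) *s zz u k l)" using p_decomp[OF uc up] by simp
    also have "\<dots> = (\<Sum>x\<in>?S. f x)" unfolding smult_sum f_def
      by (rule sum.cong) (auto simp: smult_smult)
    finally show ?thesis .
  qed
  have forth: "dotv u (f x) = 0" for x
    by (cases x) (simp add: f_def dotv_smult_right dotv_zz)
  have split: "(\<Sum>x\<in>?S. f x) = f (j,i) + (\<Sum>x\<in>?S - {(j,i)}. f x)"
    by (simp add: sum.remove)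
  have Eeq: "E1 ((-a) *s p) u = E1 (f (j,i)) u ** E1 (\<Sum>x\<in>?S - {(j,i)}. f x) u"
    unfolding sumf split by (rule E1_same_w[symmetric]) (simp add: dotv_sum_right forth)
  have restH: "E1 (\<Sum>x\<in>?S - {(j,i)}. f x) u \<in> ?H"
  proof (rule E1_sum_w)
    show "mat 1 \<in> ?H" by (rule comm_sub_one)
    show "x ** y \<in> ?H" if "x \<in> ?H" "y \<in> ?H" for x y using that by (rule comm_sub_mult)
    show "dotv u (f x) = 0" for x by (rule forth)
    show "E1 (f x) u \<in> ?H" if "x \<in> ?S - {(j,i)}" for x
    proof -
      obtain k l where x: "x = (k,l)" by (cases x)
      have kl: "k \<noteq> j \<or> l \<noteq> i" using that x by auto
      have q: "- (c$k * p$l) \<in> QQ"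
        using kl cQ pQ idQ by (metis ideal_mult_left ideal_mult_right ideal_neg)
      have "f x = (a * (- (c$k * p$l))) *s zz u k l" by (simp add: f_def x)
      then show ?thesis using Pgen[OF card3 a q] by simp
    qed
  qed simp
  have fji: "f (j,i) = (a * r) *s zz u j i" by (simp add: f_def r_def)
  have spH: "?t ** E1 (f (j,i)) u \<in> ?H"
    unfolding fji by (rule SP[OF card3 ij a uQ key])
  show ?thesis unfolding step1 Eeq matrix_mul_assoc
    using spH restH by (rule comm_sub_mult)
qed

lemma gen_sub_E: "f \<in> gen_subgroup S \<Longrightarrow> S \<subseteq> E_ideal UNIV \<Longrightarrow> f \<in> E_ideal UNIV"
  by (induction f rule: gen_subgroup.induct)
     (auto simp: E_ideal_def intro: gen_subgroup.intros)

lemma gen_comm: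
  assumes f: "f \<in> gen_subgroup S" and S: "S \<subseteq> E_ideal UNIV"
    and bs: "\<And>s g. s \<in> S \<Longrightarrow> g \<in> full_congruence QQ \<Longrightarrow> mcomm s g \<in> comm_subgroup (E_rel QQ) (E_rel A)"
  shows "g \<in> full_congruence QQ \<Longrightarrow> mcomm f g \<in> comm_subgroup (E_rel QQ) (E_rel A)"
  using f
proof (induction f arbitrary: g rule: gen_subgroup.induct)
  case one
  then have "g \<in> GL" by (rule fc_GL)
  then have "mcomm (mat 1) g = mat 1" unfolding mcomm_def by (simp add: GL_simps)
  then show ?case by (simp add: comm_sub_one)
next
  case (base s)
  then show ?case using bs by blast
next
  case (mult x y)
  have xE: "x \<in> E_ideal UNIV" using mult(1) S by (rule gen_sub_E)
  have yE: "y \<in> E_ideal UNIV" using mult(2) S by (rule gen_sub_E)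
  have G: "x \<in> GL" "y \<in> GL" "g \<in> GL" using xE yE mult(5) by (auto intro: E_ideal_GL fc_GL)
  have "mcomm (x ** y) g = (x ** mcomm y g ** minv x) ** mcomm x g"
    using G unfolding mcomm_def by (simp add: GL_simps)
  then show ?case using mult xE by (auto intro!: comm_sub_mult comm_sub_conj)
next
  case (inv x)
  have xE: "x \<in> E_ideal UNIV" using inv(1) S by (rule gen_sub_E)
  have mxE: "minv x \<in> E_ideal UNIV" using xE unfolding E_ideal_def by (rule gen_subgroup.inv)
  have G: "x \<in> GL" "g \<in> GL" using xE inv(3) by (auto intro: E_ideal_GL fc_GL)
  have "mcomm (minv x) g = minv x ** minv (mcomm x g) ** minv (minv x)"
    using G unfolding mcomm_def by (simp add: GL_simps)
  then show ?case using inv mxE by (auto intro!: comm_sub_minv comm_sub_conj)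
qed

lemma rel_comm:
  fixes g :: "'a^'n::finite^'n"
  assumes card3: "CARD('n) \<ge> 3" and f: "f \<in> E_rel A" and g: "g \<in> full_congruence QQ"
  shows "mcomm f g \<in> comm_subgroup (E_rel QQ) (E_rel A)"
proof -
  have trans: "mcomm x g' \<in> comm_subgroup (E_rel QQ) (E_rel A)"
    if x: "x \<in> E_ideal A" and g': "g' \<in> full_congruence QQ" for x and g' :: "'a^'n^'n"
    using x unfolding E_ideal_def
  proof (rule gen_comm[OF _ _ _ g'])
    show "{transvection i j \<xi> |i j \<xi>. i \<noteq> j \<and> \<xi> \<in> A} \<subseteq> E_ideal UNIV"
      by (auto intro: transvection_E_ideal)
    show "mcomm s g \<in> comm_subgroup (E_rel QQ) (E_rel A)"
      if "s \<in> {transvection i j \<xi> |i j \<xi>. i \<noteq> j \<and> \<xi> \<in> A}" "g \<in> full_congruence QQ" for s and g :: "'a^'n^'n"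
      using that by (auto intro: main_trans[OF card3])
  qed
  show ?thesis
    using f[unfolded E_rel_def]
  proof (rule gen_comm[OF _ _ _ g])
    show "{g ** x ** minv g |g x. g \<in> E_ideal UNIV \<and> x \<in> E_ideal A} \<subseteq> E_ideal UNIV"
    proof
      fix s assume "s \<in> {g ** x ** minv g |g x. g \<in> E_ideal UNIV \<and> x \<in> E_ideal A}"
      then obtain g0 x0 where s: "s = g0 ** x0 ** minv g0" "g0 \<in> E_ideal UNIV" "x0 \<in> E_ideal A" by blast
      have "x0 \<in> E_ideal UNIV" using s(3) by (rule E_ideal_mono[rotated]) simp
      then show "s \<in> E_ideal UNIV" using s unfolding E_ideal_def
        by (auto intro: gen_subgroup.intros)
    qed
    show "mcomm s g1 \<in> comm_subgroup (E_rel QQ) (E_rel A)"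
      if "s \<in> {g ** x ** minv g |g x. g \<in> E_ideal UNIV \<and> x \<in> E_ideal A}" "g1 \<in> full_congruence QQ" for s and g1 :: "'a^'n^'n"
    proof -
      from that(1) obtain g0 x0 where s: "s = g0 ** x0 ** minv g0" "g0 \<in> E_ideal UNIV" "x0 \<in> E_ideal A" by blast
      have G: "g0 \<in> GL" "x0 \<in> GL" "g1 \<in> GL" using s that(2) by (auto intro: E_ideal_GL fc_GL)
      let ?g' = "minv g0 ** g1 ** g0"
      have g'C: "?g' \<in> full_congruence QQ"
        using fc_conj[OF idQ GL_minv[OF G(1)] that(2)] G by (simp add: GL_simps)
      have "mcomm s g1 = g0 ** mcomm x0 ?g' ** minv g0"
        using G unfolding s(1) mcomm_def by (simp add: GL_simps)
      then show ?thesis using comm_sub_conj[OF s(2) trans[OF s(3) g'C]] by simp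
    qed
  qed
qed

lemma comm_level:
  assumes f: "f \<in> lev QQ" and k: "k \<in> lev A"
  shows "mI B (mcomm f k - mat 1)"
proof -
  have G: "f \<in> GL" "k \<in> GL" using f k by (auto simp: lev_def)
  have X: "mI QQ (f - mat 1)" and Y: "mI A (k - mat 1)" using f k by (auto simp: lev_def)
  have XY: "mI B ((f - mat 1) ** (k - mat 1))"
    using X Y unfolding mI_def matrix_matrix_mult_def
    by (auto intro!: ideal_sum[OF idB] simp: quot_mem)
  have YX: "mI B ((k - mat 1) ** (f - mat 1))"
    using X Y unfolding mI_def matrix_matrix_mult_def
    by (auto intro!: ideal_sum[OF idB] simp: quot_mem mult.commute)
  have "f ** k - k ** f = (f - mat 1) ** (k - mat 1) - (k - mat 1) ** (f - mat 1)"
    by (simp add: mm_diff_l mm_diff_r algebra_simps)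
  moreover have "mcomm f k - mat 1 = (f ** k - k ** f) ** (minv f ** minv k)"
    using G unfolding mcomm_def by (simp add: mm_diff_r GL_simps)
  ultimately show ?thesis using XY YX idB by (auto intro!: mI_mult_right mI_diff)
qed

lemma H_level:
  assumes h: "h \<in> comm_subgroup (E_rel QQ) (E_rel A)"
  shows "h \<in> lev B"
  using h unfolding comm_subgroup_def
proof (induction h rule: gen_subgroup.induct)
  case one then show ?case by (rule lev_one[OF idB])
next
  case (base s)
  then obtain f k where s: "s = mcomm f k" "f \<in> E_rel QQ" "k \<in> E_rel A" by blast
  have "mI B (s - mat 1)" unfolding s(1)
    by (rule comm_level) (use E_rel_lev[OF idQ s(2)] E_rel_lev[OF idA s(3)] in auto)
  moreover have "s \<in> GL" using s by (auto intro: mcomm_GL E_rel_GL)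
  ultimately show ?case by (simp add: lev_def)
next
  case (mult x y) then show ?case using lev_mult[OF idB] by blast
next
  case (inv x) then show ?case using lev_minv[OF idB] by blast
qed

lemma tg_entry:
  fixes g :: "'a^'n::finite^'n"
  shows "(transvection i j a ** g - g ** transvection i j a)$k$l
     = (if k = i then a * g$j$l else 0) - g$k$i * a * (if l = j then 1 else 0)"
proof -
  have "transvection i j a ** g = g + outer (axis i a) (g$j)"
    by (simp add: transvection_E1 E1_def mm_rdistrib outer_mat axis_vmul)
  moreover have "g ** transvection i j a = g + outer (a *s (\<chi> k. g$k$i)) (axis j 1)"
    by (simp add: transvection_E1 E1_def matrix_add_ldistrib mat_outer mulv_axis)
  ultimately show ?thesis
    by (simp add: outer_def axis_def vector_scalar_mult_def algebra_simps)
qed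

lemma cent_sub:
  fixes g :: "'a^'n::finite^'n"
  assumes gG: "g \<in> GL" and hyp: "\<And>f. f \<in> E_rel A \<Longrightarrow> mcomm f g \<in> comm_subgroup (E_rel QQ) (E_rel A)"
  shows "g \<in> full_congruence QQ"
proof -
  have tB: "mI B (transvection i j a ** g - g ** transvection i j a)" if ij: "i \<noteq> j" and a: "a \<in> A" for i j a
  proof -
    let ?t = "transvection i j a :: 'a^'n^'n"
    have tA: "?t \<in> E_rel A" using ij a by (intro E_ideal_rel transvection_E_ideal)
    have "mcomm ?t g \<in> lev B" using hyp[OF tA] by (rule H_level)
    then have m: "mI B (mcomm ?t g - mat 1)" by (simp add: lev_def)
    have tG: "?t \<in> GL" using ij by (rule transvection_GL)
    have "?t ** g - g ** ?t = (mcomm ?t g - mat 1) ** (g ** ?t)"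
      using tG gG unfolding mcomm_def by (simp add: mm_diff_r GL_simps)
    then show ?thesis using m by (simp add: mI_mult_right[OF idB])
  qed
  show ?thesis unfolding full_congruence_def
  proof (intro CollectI conjI allI impI gG)
    fix x y :: 'n assume xy: "x \<noteq> y"
    show "g$x$y \<in> QQ" unfolding ideal_quot_def
    proof (intro CollectI ballI)
      fix a assume a: "a \<in> A"
      have "(transvection y x a ** g - g ** transvection y x a)$y$y \<in> B"
        using tB[OF xy[symmetric] a] unfolding mI_def by blast
      then have "a * g$x$y \<in> B" by (subst (asm) tg_entry) (use xy in simp)
      then show "g$x$y * a \<in> B" by (simp add: mult.commute)
    qed
    show "g$x$x - g$y$y \<in> QQ" unfolding ideal_quot_def
    proof (intro CollectI ballI)
      fix a assume a: "a \<in> A"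
      have "(transvection x y a ** g - g ** transvection x y a)$x$y \<in> B"
        using tB[OF xy a] unfolding mI_def by blast
      then have "a * g$y$y - g$x$x * a \<in> B" by (subst (asm) tg_entry) (use xy in simp)
      then have "- (a * g$y$y - g$x$x * a) \<in> B" by (rule ideal_neg[OF idB])
      then show "(g$x$x - g$y$y) * a \<in> B" by (simp add: algebra_simps)
    qed
  qed
qed

end


theorem theorem2:
  fixes A B :: "'a::comm_ring_1 set"
  assumes "is_ideal A" and "is_ideal B" and "CARD('n::finite) \<ge> 3"
  shows "(centraliser_mod (E_rel A :: ('a^'n^'n) set)
            (comm_subgroup (E_rel (ideal_quot B A)) (E_rel A)))
         = full_congruence (ideal_quot B A)"
proof
  show "centraliser_mod (E_rel A :: ('a^'n^'n) set) (comm_subgroup (E_rel (ideal_quot B A)) (E_rel A))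
        \<subseteq> full_congruence (ideal_quot B A)"
    using cent_sub[OF assms(1,2)] unfolding centraliser_mod_def by blast
  show "full_congruence (ideal_quot B A) \<subseteq> centraliser_mod (E_rel A :: ('a^'n^'n) set)
        (comm_subgroup (E_rel (ideal_quot B A)) (E_rel A))"
    using rel_comm[OF assms(1,2,3)] fc_GL unfolding centraliser_mod_def by blast
qed

end
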